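(* Let $\mathcal{S}$ be a reduced LLD subspace of $\mathcal{L}(U,V)$, and let $c$ be the greatest integer for which $\mathcal{S}$ is $c$-LLD. Then $\widehat{\mathcal{S}}$ is semi-primitive if and only if $\mathcal{S}$ is minimal among the $c$-LLD subspaces of $\mathcal{L}(U,V)$.
   Context: $U,V$ finite-dimensional over a field $\mathbb{K}$. $\mathcal{S}$ is $c$-LLD if for every $x\in U$, $\dim\{f\in\mathcal{S}\mid f(x)=0\}\geq c$; LLD means $1$-LLD. $\mathcal{S}$ is reduced if $\bigcap_{f\in\mathcal{S}}\ker f=\{0\}$ and $\sum_{f\in\mathcal{S}}\mathrm{im} f=V$. $\widehat{\mathcal{S}}:=\{f\mapsto f(x)\mid x\in U\}\subseteq\mathcal{L}(\mathcal{S},V)$. For an operator space $\mathcal{T}\subseteq\mathcal{L}(W,V)$: $\mathcal{T}$ is $d$-defective if $\dim\ker g\geq d$ for all $g\in\mathcal{T}$; its defectiveness index is the greatest such $d$; $\mathcal{T}$ is semi-primitive if it is reduced and there is no linear hyperplane $W'$ of $W$ such that $\{g_{|W'}\mid g\in\mathcal{T}\}$ is $d$-defective, $d$ being the defectiveness index of $\mathcal{T}$. *)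

theory Defs
  imports Complex_Main "HOL-Library.Function_Algebras"
begin

text \<open>Vector spaces over a field 'a are given by their scalar multiplication
  (the locale vector_space of Vector_Spaces).\<close>

definition fun_scale :: "('a::field \<Rightarrow> 'v::ab_group_add \<Rightarrow> 'v) \<Rightarrow> 'a \<Rightarrow> ('u \<Rightarrow> 'v) \<Rightarrow> ('u \<Rightarrow> 'v)" where
  "fun_scale sv = (\<lambda>c f x. sv c (f x))"

definition fin_dim :: "('a::field \<Rightarrow> 'v::ab_group_add \<Rightarrow> 'v) \<Rightarrow> bool" where
  "fin_dim s \<longleftrightarrow> (\<exists>B. finite B \<and> module.span s B = UNIV)"

definition c_LLD :: "('a::field \<Rightarrow> 'v::ab_group_add \<Rightarrow> 'v) \<Rightarrow> ('u \<Rightarrow> 'v) set \<Rightarrow> nat \<Rightarrow> bool" where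
  "c_LLD sv S c \<longleftrightarrow> (\<forall>x. c \<le> vector_space.dim (fun_scale sv) {f \<in> S. f x = 0})"

definition LLD :: "('a::field \<Rightarrow> 'v::ab_group_add \<Rightarrow> 'v) \<Rightarrow> ('u \<Rightarrow> 'v) set \<Rightarrow> bool" where
  "LLD sv S \<longleftrightarrow> c_LLD sv S 1"

definition op_reduced :: "('a::field \<Rightarrow> 'w::ab_group_add \<Rightarrow> 'w) \<Rightarrow> ('a \<Rightarrow> 'v::ab_group_add \<Rightarrow> 'v)
    \<Rightarrow> 'w set \<Rightarrow> ('w \<Rightarrow> 'v) set \<Rightarrow> bool" where
  "op_reduced sw sv W T \<longleftrightarrow>
     {w \<in> W. \<forall>g\<in>T. g w = 0} = {0} \<and> module.span sv (\<Union>g\<in>T. g ` W) = UNIV"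

definition defective :: "('a::field \<Rightarrow> 'w::ab_group_add \<Rightarrow> 'w) \<Rightarrow> 'w set \<Rightarrow> ('w \<Rightarrow> 'v::zero) set \<Rightarrow> nat \<Rightarrow> bool" where
  "defective sw W T d \<longleftrightarrow> (\<forall>g\<in>T. d \<le> vector_space.dim sw {w \<in> W. g w = 0})"

definition defectiveness_index :: "('a::field \<Rightarrow> 'w::ab_group_add \<Rightarrow> 'w) \<Rightarrow> 'w set \<Rightarrow> ('w \<Rightarrow> 'v::zero) set \<Rightarrow> nat" where
  "defectiveness_index sw W T = (GREATEST d. defective sw W T d)"

text \<open>Restricting every g to a hyperplane W' of W: the kernel of the restriction
  is {w \<in> W'. g w = 0}.\<close>
definition semi_primitive :: "('a::field \<Rightarrow> 'w::ab_group_add \<Rightarrow> 'w) \<Rightarrow> ('a \<Rightarrow> 'v::ab_group_add \<Rightarrow> 'v)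
    \<Rightarrow> 'w set \<Rightarrow> ('w \<Rightarrow> 'v) set \<Rightarrow> bool" where
  "semi_primitive sw sv W T \<longleftrightarrow> op_reduced sw sv W T \<and>
     \<not> (\<exists>W'. module.subspace sw W' \<and> W' \<subseteq> W \<and>
            vector_space.dim sw W' + 1 = vector_space.dim sw W \<and>
            defective sw W' T (defectiveness_index sw W T))"

text \<open>The dual operator space S-hat = {f \<mapsto> f x | x \<in> U}, maps defined on S.\<close>
definition hat :: "('u \<Rightarrow> 'v) set \<Rightarrow> (('u \<Rightarrow> 'v) \<Rightarrow> 'v) set" where
  "hat S = {(\<lambda>f. f x) | x. True}"

end

theory Submission imports Defs begin

lemma sum_fun_apply: "(\<Sum>i\<in>A. g i) x = (\<Sum>i\<in>A. g i x)"
  by (induction A rule: infinite_finite_induct) auto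

lemma vs_fun: assumes "vector_space sv" shows "vector_space (fun_scale sv)"
proof -
  interpret V: vector_space sv by fact
  show ?thesis
    by unfold_locales (auto simp: fun_scale_def fun_eq_iff V.scale_right_distrib V.scale_left_distrib)
qed

context vector_space begin

lemma dim_mono_fin:
  assumes "A \<subseteq> B" "B \<subseteq> span F" "finite F"
  shows "dim A \<le> dim B"
proof -
  obtain A0 where A0: "A0 \<subseteq> A" "independent A0" "A \<subseteq> span A0" "card A0 = dim A"
    by (rule basis_exists[of A])
  obtain B0 where B0: "A0 \<subseteq> B0" "B0 \<subseteq> B" "independent B0" "B \<subseteq> span B0"
  proof (rule maximal_independent_subset_extend[of A0 B])
    show "A0 \<subseteq> B" using A0(1) assms(1) by (rule order.trans)
  qed (use A0 in auto)
  have fB: "finite B0" using independent_span_bound[OF assms(3) B0(3)] B0 assms by (meson order.trans)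
  have "card B0 = dim B" using basis_card_eq_dim B0 by blast
  with A0 B0 fB show ?thesis by (metis card_mono)
qed

lemma hyperplane_exists:
  assumes "subspace S'" "S' \<subset> S" "S \<subseteq> span F" "finite F" "subspace S"
  shows "\<exists>H. subspace H \<and> S' \<subseteq> H \<and> H \<subseteq> S \<and> dim H + 1 = dim S"
proof -
  obtain A0 where A0: "A0 \<subseteq> S'" "independent A0" "S' \<subseteq> span A0"
    by (rule maximal_independent_subset[of S'])
  obtain B0 where B0: "A0 \<subseteq> B0" "B0 \<subseteq> S" "independent B0" "S \<subseteq> span B0"
  proof (rule maximal_independent_subset_extend[of A0 S])
    show "A0 \<subseteq> S" using A0(1) assms(2) by blast
  qed (use A0 in auto)
  have fB: "finite B0" using independent_span_bound[OF assms(4) B0(3)] B0 assms by (meson order.trans)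
  have cS: "card B0 = dim S" using basis_card_eq_dim B0 by blast
  have "B0 \<noteq> A0"
  proof
    assume "B0 = A0"
    then have "S \<subseteq> S'" using B0(4) span_minimal[OF A0(1) assms(1)] by blast
    with assms show False by blast
  qed
  then obtain b where b: "b \<in> B0" "b \<notin> A0" using B0 by blast
  define H where "H = span (B0 - {b})"
  have iH: "independent (B0 - {b})" using B0(3) independent_mono by blast
  have "dim H = card (B0 - {b})" unfolding H_def using dim_span_eq_card_independent[OF iH] .
  moreover have "card (B0 - {b}) + 1 = card B0" using fB b
  proof -
    have "card B0 > 0" using fB b card_gt_0_iff by blast
    then show ?thesis using card_Diff_singleton[OF b(1)] by simp
  qed
  moreover have "S' \<subseteq> H" unfolding H_def using A0 B0 b span_mono[of A0 "B0 - {b}"] by blast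
  moreover have "H \<subseteq> S"
  proof -
    show ?thesis unfolding H_def using B0(2) span_minimal[of "B0-{b}" S] assms(5) by blast
  qed
  ultimately show ?thesis using cS by (auto simp: H_def)
qed


end

lemma fin_span_linear:
  assumes su: "vector_space su" and sv: "vector_space sv"
    and fu: "fin_dim su" and fv: "fin_dim sv"
  shows "\<exists>F. finite F \<and> {f. Vector_Spaces.linear su sv f} \<subseteq> module.span (fun_scale sv) F"
proof -
  interpret U: vector_space su by fact
  interpret V: vector_space sv by fact
  interpret W: vector_space "fun_scale sv" using vs_fun[OF sv] .
  obtain Bu where Bu: "finite Bu" "U.span Bu = UNIV" using fu unfolding fin_dim_def by blast
  obtain Bv where Bv: "finite Bv" "V.span Bv = UNIV" using fv unfolding fin_dim_def by blast
  have "\<forall>u. \<exists>c. u = (\<Sum>b\<in>Bu. su (c b) b)" using U.span_finite[OF Bu(1)] Bu(2) by auto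
  from choice[OF this] obtain cu where cu0: "\<forall>u. u = (\<Sum>b\<in>Bu. su (cu u b) b)" by blast
  have cu: "\<And>u. u = (\<Sum>b\<in>Bu. su (cu u b) b)" using cu0 by (rule spec)
  have "\<forall>v. \<exists>c. v = (\<Sum>e\<in>Bv. sv (c e) e)" using V.span_finite[OF Bv(1)] Bv(2) by auto
  from choice[OF this] obtain cv where cv0: "\<forall>v. v = (\<Sum>e\<in>Bv. sv (cv v e) e)" by blast
  have cv: "\<And>v. v = (\<Sum>e\<in>Bv. sv (cv v e) e)" using cv0 by (rule spec)
  define F where "F = (\<lambda>(b,e). \<lambda>u. sv (cu u b) e) ` (Bu \<times> Bv)"
  have "f \<in> W.span F" if lf: "Vector_Spaces.linear su sv f" for f
  proof -
    interpret L: Vector_Spaces.linear su sv f by fact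
    have "f = (\<Sum>p\<in>Bu \<times> Bv. fun_scale sv (cv (f (fst p)) (snd p)) ((\<lambda>(b,e). \<lambda>u. sv (cu u b) e) p))"
    proof
      fix u
      have "f u = f (\<Sum>b\<in>Bu. su (cu u b) b)" by (rule arg_cong[OF cu])
      also have "\<dots> = (\<Sum>b\<in>Bu. sv (cu u b) (f b))" by (simp add: L.sum L.scale)
      also have "\<dots> = (\<Sum>b\<in>Bu. sv (cu u b) (\<Sum>e\<in>Bv. sv (cv (f b) e) e))"
        by (rule sum.cong[OF refl], rule arg_cong[OF cv])
      also have "\<dots> = (\<Sum>b\<in>Bu. \<Sum>e\<in>Bv. sv (cv (f b) e) (sv (cu u b) e))"
        by (simp add: V.scale_sum_right mult.commute)
      also have "\<dots> = (\<Sum>p\<in>Bu \<times> Bv. sv (cv (f (fst p)) (snd p)) (sv (cu u (fst p)) (snd p)))"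
        by (simp add: sum.cartesian_product split_def)
      finally show "f u = (\<Sum>p\<in>Bu \<times> Bv. fun_scale sv (cv (f (fst p)) (snd p)) ((\<lambda>(b,e). \<lambda>u. sv (cu u b) e) p)) u"
        by (simp add: sum_fun_apply fun_scale_def split_def)
    qed
    also have "\<dots> \<in> W.span F"
      by (rule W.span_sum, rule W.span_scale, rule W.span_base) (auto simp: F_def)
    finally show ?thesis .
  qed
  moreover have "finite F" using Bu Bv by (simp add: F_def)
  ultimately show ?thesis by blast
qed

theorem mainTheorem11:
  fixes su :: "'a::field \<Rightarrow> 'u::ab_group_add \<Rightarrow> 'u"
    and sv :: "'a \<Rightarrow> 'v::ab_group_add \<Rightarrow> 'v"
    and S :: "('u \<Rightarrow> 'v) set"
    and c :: nat
  assumes "vector_space su" and "vector_space sv"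
    and "fin_dim su" and "fin_dim sv"
    and "S \<subseteq> {f. Vector_Spaces.linear su sv f}"
    and "module.subspace (fun_scale sv) S"
    and "op_reduced su sv UNIV S"
    and "LLD sv S"
    and "c = (GREATEST k. c_LLD sv S k)"
  shows "semi_primitive (fun_scale sv) sv S (hat S) \<longleftrightarrow>
         (\<forall>S'. module.subspace (fun_scale sv) S' \<and> S' \<subset> S \<longrightarrow> \<not> c_LLD sv S' c)"
proof -
  interpret W: vector_space "fun_scale sv" using vs_fun[OF assms(2)] .
  obtain F where F: "finite F" "S \<subseteq> W.span F"
    using fin_span_linear[OF assms(1-4)] assms(5) by blast
  have def_eq: "defective (fun_scale sv) X (hat S) d \<longleftrightarrow> c_LLD sv X d" for X d
    unfolding defective_def c_LLD_def hat_def by auto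
  have idx: "defectiveness_index (fun_scale sv) S (hat S) = c"
    unfolding defectiveness_index_def def_eq assms(9) ..
  have red: "op_reduced (fun_scale sv) sv S (hat S)"
  proof -
    have "0 \<in> S" using assms(6) W.subspace_0 by blast
    have 1: "{w \<in> S. \<forall>g\<in>hat S. g w = 0} = {0}"
    proof (intro equalityI subsetI)
      fix w assume w: "w \<in> {w \<in> S. \<forall>g\<in>hat S. g w = 0}"
      have h: "(\<lambda>f. f y) \<in> hat S" for y unfolding hat_def by blast
      from w have w2: "\<forall>g\<in>hat S. g w = 0" by simp
      have "(\<lambda>f. f y) w = 0" for y using bspec[OF w2 h] .
      then show "w \<in> {0}" by (auto simp: fun_eq_iff)
    next
      fix w assume "w \<in> {0::'u \<Rightarrow> 'v}"
      then show "w \<in> {w \<in> S. \<forall>g\<in>hat S. g w = 0}" using \<open>0 \<in> S\<close> by (auto simp: hat_def)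
    qed
    have "(\<Union>g\<in>hat S. g ` S) = (\<Union>g\<in>S. g ` UNIV)" by (auto simp: hat_def)
    then show ?thesis using 1 assms(7) unfolding op_reduced_def by simp
  qed
  have mono: "c_LLD sv H c" if "c_LLD sv S' c" "S' \<subseteq> H" "H \<subseteq> S" for S' H
    unfolding c_LLD_def
  proof
    fix x
    have "W.dim {f \<in> S'. f x = 0} \<le> W.dim {f \<in> H. f x = 0}"
      by (rule W.dim_mono_fin[OF _ _ F(1)]) (use that F in auto)
    then show "c \<le> W.dim {f \<in> H. f x = 0}" using that(1) unfolding c_LLD_def by (meson order.trans)
  qed
  show ?thesis
  proof
    assume sp: "semi_primitive (fun_scale sv) sv S (hat S)"
    show "\<forall>S'. W.subspace S' \<and> S' \<subset> S \<longrightarrow> \<not> c_LLD sv S' c"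
    proof (intro allI impI notI)
      fix S' assume S': "W.subspace S' \<and> S' \<subset> S" and cl: "c_LLD sv S' c"
      obtain H where H: "W.subspace H" "S' \<subseteq> H" "H \<subseteq> S" "W.dim H + 1 = W.dim S"
        using W.hyperplane_exists[of S' S F] S' F assms(6) by blast
      have "c_LLD sv H c" using mono[OF cl H(2,3)] .
      then show False using sp H unfolding semi_primitive_def idx def_eq by blast
    qed
  next
    assume m: "\<forall>S'. W.subspace S' \<and> S' \<subset> S \<longrightarrow> \<not> c_LLD sv S' c"
    show "semi_primitive (fun_scale sv) sv S (hat S)"
      unfolding semi_primitive_def idx def_eq
    proof (intro conjI red notI)
      assume "\<exists>W'. W.subspace W' \<and> W' \<subseteq> S \<and> W.dim W' + 1 = W.dim S \<and> c_LLD sv W' c"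
      then obtain W' where "W.subspace W'" "W' \<subseteq> S" "W.dim W' + 1 = W.dim S" "c_LLD sv W' c" by blast
      moreover have "W' \<noteq> S" using \<open>W.dim W' + 1 = W.dim S\<close> by auto
      ultimately show False using m by blast
    qed
  qed
qed

end
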